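(* Let $I\subset\mathbb R$ be an interval and $\alpha\in C^\infty(I,C^\infty(\mathbb S))$ a solution of $\frac{\partial\alpha_\tau}{\partial\tau}=-\alpha_\tau(\Lambda\alpha_\tau)+(\mathcal H\alpha_\tau)(D\alpha_\tau)$ on $I$ such that $\alpha_\tau$ is a positive function for every $\tau\in I$. Then $\int_0^{2\pi}\alpha_\tau^{-1}\,d\theta$ is independent of $\tau\in I$.
   Context: $D=-i\,d/d\theta$, $\Lambda e^{in\theta}=|n|e^{in\theta}$, Hilbert transform $\mathcal H\mathbf 1=0$, $\mathcal He^{in\theta}=\mathrm{sgn}(n)e^{in\theta}$ ($n\ne0$); products are pointwise products of functions on $\mathbb S$. *)

theory Defs
  imports "HOL-Analysis.Analysis"
begin

text \<open>Functions on the circle S are 2pi-periodic functions on the real line.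
  Fourier coefficients of f: c_n = (1/2pi) * integral over [0,2pi] of f(theta) e^{-i n theta}.\<close>
definition fourier_coeff :: "(real \<Rightarrow> complex) \<Rightarrow> int \<Rightarrow> complex" where
  "fourier_coeff f n = integral {0..2*pi} (\<lambda>\<theta>. f \<theta> * cis (- (of_int n * \<theta>))) / complex_of_real (2*pi)"

definition hilbert :: "(real \<Rightarrow> complex) \<Rightarrow> real \<Rightarrow> complex" where
  "hilbert f \<theta> = (\<Sum>\<^sub>\<infinity>n::int. of_int (sgn n) * fourier_coeff f n * cis (of_int n * \<theta>))"

definition Lam :: "(real \<Rightarrow> complex) \<Rightarrow> real \<Rightarrow> complex" where
  "Lam f \<theta> = (\<Sum>\<^sub>\<infinity>n::int. of_int \<bar>n\<bar> * fourier_coeff f n * cis (of_int n * \<theta>))"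

definition Dop :: "(real \<Rightarrow> complex) \<Rightarrow> real \<Rightarrow> complex" where
  "Dop f \<theta> = - \<i> * vector_derivative f (at \<theta>)"

text \<open>Joint C-infinity smoothness of a function of two real variables on a set S of R^2:
  there is a family G j k (playing the role of the partial derivative d^j/dx^j d^k/dy^k f)
  with G 0 0 = f on S and each G j k Frechet differentiable within S with derivative given
  by the next partial derivatives.\<close>
definition smooth2_on :: "(real \<times> real) set \<Rightarrow> (real \<times> real \<Rightarrow> real) \<Rightarrow> bool" where
  "smooth2_on S f \<longleftrightarrow> (\<exists>G :: nat \<Rightarrow> nat \<Rightarrow> real \<times> real \<Rightarrow> real.
     (\<forall>x\<in>S. G 0 0 x = f x) \<and>
     (\<forall>j k. \<forall>x\<in>S. (G j k has_derivative (\<lambda>h. fst h * G (Suc j) k x + snd h * G j (Suc k) x))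
                     (at x within S)))"

end

theory Submission
  imports Defs
begin
lemma cis_vd:
  "((\<lambda>x. cis (- (of_int n * x))) has_vector_derivative (- (\<i> * of_int n * cis (- (of_int n * x))))) (at x within S)"
proof -
  have "((\<lambda>x. cis (- (of_int n * x))) has_derivative (\<lambda>t. (- (of_int n * t)) *\<^sub>R (\<i> * cis (- (of_int n * x))))) (at x within S)"
    by (rule has_derivative_cis) (auto intro!: derivative_eq_intros)
  thus ?thesis unfolding has_vector_derivative_def
    by (rule has_derivative_eq_rhs) (auto simp: fun_eq_iff scaleR_conv_of_real algebra_simps)
qed

lemma coeff_deriv:
  fixes f f' :: "real \<Rightarrow> real" and n :: int
  assumes d: "\<And>x. (f has_real_derivative f' x) (at x)" and c: "continuous_on UNIV f'"
   and p: "f (2*pi) = f 0" and n: "n \<noteq> 0"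
  shows "fourier_coeff (\<lambda>x. complex_of_real (f x)) n = fourier_coeff (\<lambda>x. complex_of_real (f' x)) n / (\<i> * of_int n)"
proof -
  define e where "e x = cis (- (of_int n * x))" for x
  have cf: "continuous_on UNIV f" using d
    by (meson DERIV_isCont continuous_at_imp_continuous_on)
  have ce: "continuous_on UNIV e" unfolding e_def by (intro continuous_intros)
  have vd: "((\<lambda>x. complex_of_real (f x) * e x) has_vector_derivative
       (complex_of_real (f x) * (- (\<i> * of_int n * e x)) + complex_of_real (f' x) * e x)) (at x within {0..2*pi})" for x
    unfolding e_def by (rule has_vector_derivative_mult[OF has_vector_derivative_of_real[OF DERIV_subset[OF d]] cis_vd]) auto
  have e2: "e (2*pi) = 1" "e 0 = 1" unfolding e_def
    using cis_multiple_2pi[of "- of_int n"] by (auto simp: mult.commute mult.left_commute)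
  have h0: "((\<lambda>x. complex_of_real (f x) * (- (\<i> * of_int n * e x)) + complex_of_real (f' x) * e x) has_integral 0) {0..2*pi}"
    using fundamental_theorem_of_calculus[OF _ vd] e2 p by auto
  have i1: "(\<lambda>x. complex_of_real (f x) * e x) integrable_on {0..2*pi}"
    by (intro integrable_continuous_real continuous_intros continuous_on_subset[OF cf] continuous_on_subset[OF ce]) auto
  have i2: "(\<lambda>x. complex_of_real (f' x) * e x) integrable_on {0..2*pi}"
    by (intro integrable_continuous_real continuous_intros continuous_on_subset[OF c] continuous_on_subset[OF ce]) auto
  have h1': "((\<lambda>x. complex_of_real (f x) * (- (\<i> * of_int n * e x)) + complex_of_real (f' x) * e x) has_integral
     ((- (\<i> * of_int n)) * integral {0..2*pi} (\<lambda>x. complex_of_real (f x) * e x) + integral {0..2*pi} (\<lambda>x. complex_of_real (f' x) * e x))) {0..2*pi}"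
    using has_integral_add[OF has_integral_mult_right[OF integrable_integral[OF i1]] integrable_integral[OF i2], of "- (\<i> * of_int n)"]
    by (simp add: algebra_simps)
  have "integral {0..2*pi} (\<lambda>x. complex_of_real (f' x) * e x) = (\<i> * of_int n) * integral {0..2*pi} (\<lambda>x. complex_of_real (f x) * e x)"
    using has_integral_unique[OF h0 h1'] by (simp add: algebra_simps)
  thus ?thesis using n unfolding fourier_coeff_def e_def[symmetric]
    by (simp add: field_simps)
qed

lemma sq_sum: "N \<ge> 1 \<Longrightarrow> (\<Sum>k=1..N. 1/(real k)^2) \<le> 2 - 1/real N"
proof (induction N rule: dec_induct)
  case base then show ?case by simp
next
  case (step N)
  have "(\<Sum>k=1..Suc N. 1/(real k)^2) = (\<Sum>k=1..N. 1/(real k)^2) + 1/(real N + 1)^2"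
    by simp
  also have "\<dots> \<le> 2 - 1/real N + 1/(real N + 1)^2" using step by simp
  also have "\<dots> \<le> 2 - 1/real (Suc N)"
  proof -
    have N: "real N \<ge> 1" using step by simp
    have "1/(real N + 1)^2 + 1/(real N + 1) \<le> 1/real N"
    proof -
      have eq: "1/(real N + 1)^2 + 1/(real N + 1) = (real N + 2)/(real N + 1)^2"
        using N by (simp add: add_divide_distrib[symmetric] power2_eq_square divide_simps)
      have "(real N + 2) * real N \<le> 1 * (real N + 1)^2" by (simp add: power2_eq_square algebra_simps)
      moreover have "0 < (real N + 1)^2" using N by simp
      ultimately have "(real N + 2)/(real N + 1)^2 \<le> 1/real N" using N
        by (subst frac_le_eq) (auto simp: divide_simps simp del: of_nat_Suc)
      thus ?thesis using eq by simp
    qed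
    moreover have "real (Suc N) = real N + 1" by simp
    ultimately show ?thesis by (simp only:)
  qed
  finally show ?case .
qed

definition w :: "int \<Rightarrow> real" where "w n = 1 / (max 1 \<bar>real_of_int n\<bar>)^2"

lemma w_pos: "w n > 0" unfolding w_def by simp

lemma w_nat_sum: "(\<Sum>k\<in>{0..N}. w (int k)) \<le> 3"
proof (cases "N = 0")
  case True then show ?thesis by (simp add: w_def)
next
  case False
  have "{0..N} = insert 0 {1..N}" by auto
  hence "(\<Sum>k\<in>{0..N}. w (int k)) = w 0 + (\<Sum>k=1..N. w (int k))" by simp
  also have "(\<Sum>k=1..N. w (int k)) = (\<Sum>k=1..N. 1/(real k)^2)"
    by (intro sum.cong) (auto simp: w_def)
  also have "\<dots> \<le> 2" using sq_sum[of N] False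
  proof -
    have "1 / real N \<ge> 0" by simp
    thus ?thesis using sq_sum[of N] False by linarith
  qed
  finally show ?thesis by (simp add: w_def)
qed

lemma w_nat_sum': "(\<Sum>k\<in>{0..N}. w (- int k)) \<le> 3"
proof -
  have "w (- int k) = w (int k)" for k by (simp add: w_def)
  thus ?thesis using w_nat_sum by simp
qed

lemma w_sum_bound:
  assumes "finite F" shows "sum w F \<le> 6"
proof -
  define M where "M = Max (insert 0 (abs ` F))"
  define N where "N = nat M"
  have M0: "M \<ge> 0" unfolding M_def using assms by (intro Max_ge) auto
  have NM: "int N = M" unfolding N_def using M0 by simp
  have bnd: "\<bar>n\<bar> \<le> int N" if "n \<in> F" for n
    unfolding NM M_def using assms that by (intro Max_ge) auto
  have sub: "F \<subseteq> int ` {0..N} \<union> (\<lambda>k. - int k) ` {0..N}"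
  proof
    fix n assume n: "n \<in> F"
    show "n \<in> int ` {0..N} \<union> (\<lambda>k. - int k) ` {0..N}"
    proof (cases "n \<ge> 0")
      case True
      hence "n = int (nat n)" "nat n \<in> {0..N}" using bnd[OF n] by auto
      thus ?thesis by blast
    next
      case False
      hence "n = - int (nat (-n))" "nat (-n) \<in> {0..N}" using bnd[OF n] by auto
      thus ?thesis by blast
    qed
  qed
  have wn: "\<And>x. 0 \<le> w x" using w_pos less_imp_le by blast
  have "sum w F \<le> sum w (int ` {0..N} \<union> (\<lambda>k. - int k) ` {0..N})"
    by (rule sum_mono2[OF _ sub]) (simp_all add: wn)
  also have "\<dots> \<le> sum w (int ` {0..N}) + sum w ((\<lambda>k. - int k) ` {0..N})"
    using sum_Un[of "int ` {0..N}" "(\<lambda>k. - int k) ` {0..N}" w]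
      sum_nonneg[of "int ` {0..N} \<inter> (\<lambda>k. - int k) ` {0..N}" w] wn by simp
  also have "sum w (int ` {0..N}) = (\<Sum>k\<in>{0..N}. w (int k))"
    by (subst sum.reindex) (auto simp: inj_on_def)
  also have "sum w ((\<lambda>k. - int k) ` {0..N}) = (\<Sum>k\<in>{0..N}. w (- int k))"
    by (subst sum.reindex) (auto simp: inj_on_def)
  finally have "sum w F \<le> (\<Sum>k\<in>{0..N}. w (int k)) + (\<Sum>k\<in>{0..N}. w (- int k))" .
  moreover have "(\<Sum>k\<in>{0..N}. w (int k)) \<le> 3" by (rule w_nat_sum)
  moreover have "(\<Sum>k\<in>{0..N}. w (- int k)) \<le> 3" by (rule w_nat_sum')
  ultimately show ?thesis by linarith
qed

lemma summable_w:
  fixes u :: "int \<Rightarrow> complex"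
  assumes un: "\<And>n. norm (u n) \<le> K * w n"
  shows "u summable_on UNIV"
proof -
  have "0 \<le> K * w 0" using un[of 0] norm_ge_zero order_trans by blast
  hence K: "K \<ge> 0" using w_pos[of 0] by (simp add: zero_le_mult_iff)
  have bd: "sum (\<lambda>n. norm (u n)) F \<le> K * 6" if "finite F" for F
  proof -
    have "sum (\<lambda>n. norm (u n)) F \<le> sum (\<lambda>n. K * w n) F" by (rule sum_mono) (rule un)
    also have "\<dots> = K * sum w F" by (simp add: sum_distrib_left)
    also have "\<dots> \<le> K * 6" by (rule mult_left_mono[OF w_sum_bound[OF that] K])
    finally show ?thesis .
  qed
  have "(\<lambda>n. norm (u n)) summable_on UNIV"
    apply (rule nonneg_bdd_above_summable_on)
     apply simp
    apply (rule bdd_aboveI2[where M="K*6"])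
    using bd by blast
  thus ?thesis by (rule abs_summable_summable)
qed

lemma sym_tendsto:
  fixes u :: "int \<Rightarrow> complex"
  assumes "u summable_on UNIV"
  shows "(\<lambda>N. sum u {- int N..int N}) \<longlonglongrightarrow> infsum u UNIV"
proof -
  have "filterlim (\<lambda>N::nat. {- int N..int N}) (finite_subsets_at_top UNIV) sequentially"
    unfolding filterlim_finite_subsets_at_top
  proof (intro allI impI)
    fix X :: "int set" assume "finite X \<and> X \<subseteq> UNIV"
    hence fX: "finite X" by simp
    define M where "M = nat (Max (insert 0 (abs ` X)))"
    have "\<bar>n\<bar> \<le> int M" if "n \<in> X" for n
      unfolding M_def using fX that by (auto intro!: Max_ge)
    hence "X \<subseteq> {- int N..int N}" if "N \<ge> M" for N
    proof -
      have "\<bar>n\<bar> \<le> int N" if "n \<in> X" for n using \<open>\<And>n. n \<in> X \<Longrightarrow> \<bar>n\<bar> \<le> int M\<close>[OF that] \<open>N \<ge> M\<close> by linarith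
      thus ?thesis by (metis abs_le_iff atLeastAtMost_iff minus_le_iff subsetI)
    qed
    thus "eventually (\<lambda>N. finite {- int N..int N} \<and> X \<subseteq> {- int N..int N} \<and> {- int N..int N} \<subseteq> UNIV) sequentially"
      unfolding eventually_sequentially by auto
  qed
  from filterlim_compose[OF infsum_tendsto[OF assms] this] show ?thesis by (simp add: o_def)
qed

lemma coeff_bound:
  assumes c: "continuous_on {0..2*pi} g" and b: "\<And>x. x \<in> {0..2*pi} \<Longrightarrow> \<bar>g x\<bar> \<le> B"
  shows "norm (fourier_coeff (\<lambda>x. complex_of_real (g x)) n) \<le> B"
proof -
  have "norm (integral {0..2*pi} (\<lambda>x. complex_of_real (g x) * cis (- (of_int n * x)))) \<le> B * (2*pi - 0)"
    by (rule integral_bound) (auto intro!: continuous_intros c simp: norm_mult b)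
  thus ?thesis unfolding fourier_coeff_def using pi_gt_zero by (simp add: norm_divide divide_le_eq mult.commute)
qed

lemma cont_bound:
  fixes g :: "real \<Rightarrow> real"
  assumes "continuous_on {a..b} g" shows "\<exists>B\<ge>0. \<forall>x\<in>{a..b}. \<bar>g x\<bar> \<le> B"
proof -
  have "bounded (g ` {a..b})" by (rule compact_imp_bounded[OF compact_continuous_image[OF assms]]) simp
  then obtain B where "\<forall>y\<in>g ` {a..b}. norm y \<le> B" by (auto simp: bounded_iff)
  thus ?thesis by (intro exI[of _ "max B 0"]) auto
qed

lemma coeff_decay:
  fixes d :: "nat \<Rightarrow> real \<Rightarrow> real"
  assumes der: "\<And>k x. (d k has_real_derivative d (Suc k) x) (at x)"
    and per: "\<And>k. d k (2*pi) = d k 0"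
  shows "\<exists>K. \<forall>n. norm (fourier_coeff (\<lambda>x. complex_of_real (d 0 x)) n) * (real_of_int \<bar>n\<bar> + 1) \<le> K * w n"
proof -
  have cont: "continuous_on UNIV (d k)" for k using der
    by (meson DERIV_isCont continuous_at_imp_continuous_on)
  obtain B0 where B0: "B0 \<ge> 0" "\<forall>x\<in>{0..2*pi}. \<bar>d 0 x\<bar> \<le> B0"
    using cont_bound[OF continuous_on_subset[OF cont subset_UNIV]] by blast
  obtain B3 where B3: "B3 \<ge> 0" "\<forall>x\<in>{0..2*pi}. \<bar>d 3 x\<bar> \<le> B3"
    using cont_bound[OF continuous_on_subset[OF cont subset_UNIV]] by blast
  define c where "c k n = fourier_coeff (\<lambda>x. complex_of_real (d k x)) n" for k n
  have step: "c k n = c (Suc k) n / (\<i> * of_int n)" if "n \<noteq> 0" for k n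
    unfolding c_def by (rule coeff_deriv[OF der cont per that])
  have bnd3: "norm (c 3 n) \<le> B3" for n unfolding c_def
    by (rule coeff_bound) (auto intro: continuous_on_subset[OF cont] B3(2)[rule_format])
  have bnd0: "norm (c 0 n) \<le> B0" for n unfolding c_def
    by (rule coeff_bound) (auto intro: continuous_on_subset[OF cont] B0(2)[rule_format])
  have "norm (c 0 n) * (real_of_int \<bar>n\<bar> + 1) \<le> (B0 + 2 * B3) * w n" for n
  proof (cases "n = 0")
    case True thus ?thesis using bnd0[of n] B3 by (simp add: w_def)
  next
    case False
    define m where "m = real_of_int \<bar>n\<bar>"
    have m1: "m \<ge> 1" using False unfolding m_def by linarith
    define z where "z = \<i> * (of_int n :: complex)"
    have s0: "c 0 n = c 1 n / z" using step[OF False, of 0] by (simp add: z_def)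
    have s1: "c 1 n = c 2 n / z" using step[OF False, of 1] by (simp add: z_def numeral_2_eq_2)
    have s2: "c 2 n = c 3 n / z" using step[OF False, of 2] by (simp add: z_def eval_nat_numeral)
    have "c 0 n = c 3 n / (\<i> * of_int n)^3"
      unfolding z_def[symmetric] s0 s1 s2 by (simp add: power3_eq_cube divide_divide_eq_left mult.assoc)
    hence "norm (c 0 n) = norm (c 3 n) / m^3"
      by (simp add: norm_divide norm_mult norm_power m_def)
    hence "norm (c 0 n) \<le> B3 / m^3" using bnd3[of n] m1 by (simp add: divide_right_mono)
    hence "norm (c 0 n) * (m + 1) \<le> B3 / m^3 * (m + 1)" using m1 by (intro mult_right_mono) auto
    also have "\<dots> \<le> B3 / m^3 * (2 * m)" using m1 B3(1) by (intro mult_left_mono) auto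
    also have "\<dots> = 2 * B3 * (1 / m^2)" using m1 by (simp add: power3_eq_cube power2_eq_square field_simps)
    also have "\<dots> \<le> (B0 + 2 * B3) * (1 / m^2)" using B0(1) by (intro mult_right_mono) auto
    also have "1 / m^2 = w n" unfolding w_def m_def using m1 m_def by simp
    finally show ?thesis unfolding m_def .
  qed
  thus ?thesis unfolding c_def by blast
qed

lemma cis_vd':
  "((\<lambda>x. cis (of_int n * x)) has_vector_derivative (\<i> * of_int n * cis (of_int n * x))) (at x within S)"
proof -
  have "((\<lambda>x. cis (of_int n * x)) has_derivative (\<lambda>t. (of_int n * t) *\<^sub>R (\<i> * cis (of_int n * x)))) (at x within S)"
    by (rule has_derivative_cis) (auto intro!: derivative_eq_intros)
  thus ?thesis unfolding has_vector_derivative_def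
    by (rule has_derivative_eq_rhs) (auto simp: fun_eq_iff scaleR_conv_of_real algebra_simps)
qed

lemma sgn_int_mult: "of_int (sgn n) * of_int n = (of_int \<bar>n\<bar> :: complex)"
  by (cases "n > 0"; cases "n = 0") auto

lemma norm_sum_bound:
  fixes u :: "int \<Rightarrow> complex"
  assumes "\<And>n. norm (u n) \<le> K * w n" "finite F"
  shows "norm (sum u F) \<le> 6 * K"
proof -
  have "0 \<le> K * w 0" using assms(1)[of 0] norm_ge_zero order_trans by blast
  hence K: "K \<ge> 0" using w_pos[of 0] by (simp add: zero_le_mult_iff)
  have "norm (sum u F) \<le> sum (\<lambda>n. norm (u n)) F" by (rule norm_sum)
  also have "\<dots> \<le> sum (\<lambda>n. K * w n) F" by (rule sum_mono) (rule assms(1))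
  also have "\<dots> = K * sum w F" by (simp add: sum_distrib_left)
  also have "\<dots> \<le> K * 6" by (rule mult_left_mono[OF w_sum_bound[OF assms(2)] K])
  finally show ?thesis by simp
qed

lemma main_identity:
  fixes d :: "nat \<Rightarrow> real \<Rightarrow> real"
  assumes der: "\<And>k x. (d k has_real_derivative d (Suc k) x) (at x)"
    and per: "\<And>k. d k (2*pi) = d k 0"
    and pos: "\<And>x. d 0 x > 0"
  defines "f \<equiv> (\<lambda>x. complex_of_real (d 0 x))"
  shows "integral {0..2*pi} (\<lambda>\<theta>. (- f \<theta> * Lam f \<theta> + hilbert f \<theta> * Dop f \<theta>) / (f \<theta>)^2) = 0"
proof -
  define a where "a n = fourier_coeff f n" for n
  obtain K where K: "\<And>n. norm (a n) * (real_of_int \<bar>n\<bar> + 1) \<le> K * w n"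
    using coeff_decay[of d, OF der per] unfolding a_def f_def by blast
  have cont: "continuous_on UNIV (d k)" for k using der
    by (meson DERIV_isCont continuous_at_imp_continuous_on)
  define g where "g x = complex_of_real (1 / d 0 x)" for x
  define g' where "g' x = complex_of_real (- d 1 x / (d 0 x)^2)" for x
  have gd: "(g has_vector_derivative g' x) (at x within S)" for x S
  proof -
    have "((\<lambda>x. 1 / d 0 x) has_real_derivative (- d 1 x / (d 0 x)^2)) (at x within S)"
      using pos[of x] by (auto intro!: derivative_eq_intros DERIV_subset[OF der] simp: power2_eq_square)
    thus ?thesis unfolding g_def g'_def by (rule has_vector_derivative_of_real)
  qed
  have cg: "continuous_on UNIV g" unfolding g_def using pos
    by (intro continuous_intros cont) (simp add: less_imp_neq[symmetric])
  have cg': "continuous_on UNIV g'" unfolding g'_def using pos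
    by (intro continuous_intros cont) (simp add: less_imp_neq[symmetric])
  define tL where "tL \<theta> n = of_int \<bar>n\<bar> * a n * cis (of_int n * \<theta>)" for \<theta> n
  define tH where "tH \<theta> n = of_int (sgn n) * a n * cis (of_int n * \<theta>)" for \<theta> n
  have tLb: "norm (tL \<theta> n) \<le> K * w n" for \<theta> n
  proof -
    have "norm (tL \<theta> n) = norm (a n) * real_of_int \<bar>n\<bar>" by (simp add: tL_def norm_mult)
    also have "\<dots> \<le> norm (a n) * (real_of_int \<bar>n\<bar> + 1)" by (intro mult_left_mono) auto
    finally show ?thesis using K[of n] by linarith
  qed
  have tHb: "norm (tH \<theta> n) \<le> K * w n" for \<theta> n
  proof -
    have "norm (tH \<theta> n) = norm (a n) * \<bar>real_of_int (sgn n)\<bar>" by (simp add: tH_def norm_mult)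
    also have "\<dots> \<le> norm (a n) * (real_of_int \<bar>n\<bar> + 1)" by (intro mult_left_mono) (auto simp: sgn_if)
    finally show ?thesis using K[of n] by linarith
  qed
  have Lam_eq: "Lam f \<theta> = infsum (tL \<theta>) UNIV" for \<theta> unfolding Lam_def tL_def a_def ..
  have hil_eq: "hilbert f \<theta> = infsum (tH \<theta>) UNIV" for \<theta> unfolding hilbert_def tH_def a_def ..
  have Dop_eq: "Dop f \<theta> = - \<i> * complex_of_real (d 1 \<theta>)" for \<theta>
    unfolding Dop_def f_def by (simp add: vector_derivative_at[OF has_vector_derivative_of_real[OF der]])
  define h where "h N \<theta> = - (g \<theta> * sum (tL \<theta>) {- int N..int N} - \<i> * g' \<theta> * sum (tH \<theta>) {- int N..int N})" for N \<theta>
  define T where "T \<theta> = (- f \<theta> * Lam f \<theta> + hilbert f \<theta> * Dop f \<theta>) / (f \<theta>)^2" for \<theta>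
  have T_eq: "T \<theta> = - (g \<theta> * Lam f \<theta> - \<i> * g' \<theta> * hilbert f \<theta>)" for \<theta>
  proof -
    have "f \<theta> \<noteq> 0" unfolding f_def using pos[of \<theta>] by simp
    thus ?thesis unfolding T_def g_def g'_def Dop_eq using pos[of \<theta>]
      by (simp add: f_def field_simps power2_eq_square)
  qed
  have conv: "(\<lambda>N. h N \<theta>) \<longlonglongrightarrow> T \<theta>" for \<theta>
  proof -
    have "(\<lambda>N. sum (tL \<theta>) {- int N..int N}) \<longlonglongrightarrow> Lam f \<theta>"
      unfolding Lam_eq by (rule sym_tendsto[OF summable_w[OF tLb]])
    moreover have "(\<lambda>N. sum (tH \<theta>) {- int N..int N}) \<longlonglongrightarrow> hilbert f \<theta>"
      unfolding hil_eq by (rule sym_tendsto[OF summable_w[OF tHb]])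
    ultimately show ?thesis unfolding h_def T_eq by (intro tendsto_intros)
  qed
  obtain Bg where Bg: "\<forall>x\<in>{0..2*pi}. norm (g x) \<le> Bg"
    using compact_imp_bounded[OF compact_continuous_image[OF continuous_on_subset[OF cg subset_UNIV] compact_Icc[of 0 "2*pi"]]]
    by (auto simp: bounded_iff)
  obtain Bg' where Bg': "\<forall>x\<in>{0..2*pi}. norm (g' x) \<le> Bg'"
    using compact_imp_bounded[OF compact_continuous_image[OF continuous_on_subset[OF cg' subset_UNIV] compact_Icc[of 0 "2*pi"]]]
    by (auto simp: bounded_iff)
  have hb: "norm (h N \<theta>) \<le> Bg * (6 * K) + Bg' * (6 * K)" if "\<theta> \<in> {0..2*pi}" for N \<theta>
  proof -
    have "norm (h N \<theta>) \<le> norm (g \<theta>) * norm (sum (tL \<theta>) {- int N..int N}) + norm (g' \<theta>) * norm (sum (tH \<theta>) {- int N..int N})"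
      unfolding h_def by (metis (no_types, lifting) mult.assoc norm_minus_cancel norm_mult norm_triangle_ineq4 norm_ii mult_1)
    also have "\<dots> \<le> Bg * (6 * K) + Bg' * (6 * K)"
      by (intro add_mono mult_mono norm_sum_bound[OF tLb] norm_sum_bound[OF tHb])
         (use Bg Bg' that in \<open>auto intro: order_trans[OF norm_ge_zero]\<close>)
    finally show ?thesis .
  qed
  have hcont: "continuous_on UNIV (h N)" for N
    unfolding h_def tL_def tH_def by (intro continuous_intros cg cg')
  have hint0: "(h N has_integral 0) {0..2*pi}" for N
  proof -
    define E where "E n x = cis (of_int n * x) * g x" for n x
    define E' where "E' n x = cis (of_int n * x) * g' x + (\<i> * of_int n * cis (of_int n * x)) * g x" for n x
    have Ed: "(E n has_vector_derivative E' n x) (at x within {0..2*pi})" for n x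
      unfolding E_def E'_def by (rule has_vector_derivative_mult[OF cis_vd' gd])
    have E2: "E n (2*pi) = E n 0" for n
    proof -
      have "cis (of_int n * (2*pi)) = 1" using cis_multiple_2pi[of "of_int n"]
        by (simp add: mult.commute mult.left_commute)
      moreover have "g (2*pi) = g 0" unfolding g_def using per[of 0] by simp
      ultimately show ?thesis unfolding E_def by simp
    qed
    have "((\<lambda>x. \<Sum>n\<in>{- int N..int N}. (\<i> * of_int (sgn n) * a n) * E' n x) has_integral
            (\<Sum>n\<in>{- int N..int N}. (\<i> * of_int (sgn n) * a n) * 0)) {0..2*pi}"
    proof (rule has_integral_sum)
      fix n
      have "(E' n has_integral (E n (2*pi) - E n 0)) {0..2*pi}"
        by (rule fundamental_theorem_of_calculus) (use Ed in auto)
      thus "((\<lambda>x. (\<i> * of_int (sgn n) * a n) * E' n x) has_integral (\<i> * of_int (sgn n) * a n) * 0) {0..2*pi}"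
        using E2 by (intro has_integral_mult_right) simp
    qed simp
    moreover have "h N = (\<lambda>x. \<Sum>n\<in>{- int N..int N}. (\<i> * of_int (sgn n) * a n) * E' n x)"
    proof (rule ext)
      fix x
      have "(\<i> * of_int (sgn n) * a n) * E' n x = - (g x * tL x n - \<i> * g' x * tH x n)" for n
      proof -
        have "(\<i> * of_int (sgn n) * a n) * E' n x =
           \<i> * of_int (sgn n) * a n * cis (of_int n * x) * g' x - (of_int (sgn n) * of_int n) * a n * cis (of_int n * x) * g x"
          unfolding E'_def by (simp add: algebra_simps)
        also have "\<dots> = - (g x * tL x n - \<i> * g' x * tH x n)"
          unfolding sgn_int_mult tL_def tH_def by (simp add: algebra_simps)
        finally show ?thesis .
      qed
      thus "h N x = (\<Sum>n\<in>{- int N..int N}. (\<i> * of_int (sgn n) * a n) * E' n x)" unfolding h_def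
        by (simp add: sum_negf sum_subtractf sum_distrib_left)
    qed
    ultimately show ?thesis by simp
  qed
  have "(\<lambda>N. integral {0..2*pi} (h N)) \<longlonglongrightarrow> integral {0..2*pi} T"
    by (rule dominated_convergence(2)[where h="\<lambda>_. Bg * (6 * K) + Bg' * (6 * K)"])
       (use hint0 hb conv in auto)
  moreover have "integral {0..2*pi} (h N) = 0" for N using hint0 by (rule integral_unique)
  ultimately have "integral {0..2*pi} T = 0" by (simp add: LIMSEQ_const_iff)
  thus ?thesis unfolding T_def .
qed

lemma partials:
  fixes G :: "nat \<Rightarrow> nat \<Rightarrow> real \<times> real \<Rightarrow> real"
  assumes G: "\<forall>j k. \<forall>x\<in>I \<times> UNIV. (G j k has_derivative (\<lambda>h. fst h * G (Suc j) k x + snd h * G j (Suc k) x)) (at x within I \<times> UNIV)"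
    and t: "t \<in> I"
  shows "((\<lambda>y. G j k (t, y)) has_real_derivative G j (Suc k) (t, y)) (at y)"
    and "((\<lambda>s. G j k (s, y)) has_real_derivative G (Suc j) k (t, y)) (at t within I)"
proof -
  have G1: "\<And>x. x \<in> I \<times> UNIV \<Longrightarrow> (G j k has_derivative (\<lambda>h. fst h * G (Suc j) k x + snd h * G j (Suc k) x)) (at x within I \<times> UNIV)"
    using G by blast
  have p1: "((\<lambda>y. (t, y)) has_derivative (\<lambda>h. (0, h))) (at y)" by (auto intro!: derivative_eq_intros)
  have s1: "(\<lambda>y. (t, y)) ` UNIV \<subseteq> I \<times> UNIV" using t by auto
  from has_derivative_in_compose2[OF G1 s1 _ p1]
  have "((\<lambda>y. G j k (t, y)) has_derivative (\<lambda>h. fst (0, h) * G (Suc j) k (t, y) + snd (0, h) * G j (Suc k) (t, y))) (at y)"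
    by simp
  thus "((\<lambda>y. G j k (t, y)) has_real_derivative G j (Suc k) (t, y)) (at y)"
    unfolding has_field_derivative_def by (rule has_derivative_eq_rhs) (auto simp: fun_eq_iff mult.commute)
  have p2: "((\<lambda>s. (s, y)) has_derivative (\<lambda>h. (h, 0))) (at t within I)" by (auto intro!: derivative_eq_intros)
  have s2: "(\<lambda>s. (s, y)) ` I \<subseteq> I \<times> UNIV" by auto
  from has_derivative_in_compose2[OF G1 s2 t p2]
  have "((\<lambda>s. G j k (s, y)) has_derivative (\<lambda>h. fst (h, 0) * G (Suc j) k (t, y) + snd (h, 0) * G j (Suc k) (t, y))) (at t within I)"
    by simp
  thus "((\<lambda>s. G j k (s, y)) has_real_derivative G (Suc j) k (t, y)) (at t within I)"
    unfolding has_field_derivative_def by (rule has_derivative_eq_rhs) (auto simp: fun_eq_iff mult.commute)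
qed

lemma periodic_derivs:
  fixes d :: "nat \<Rightarrow> real \<Rightarrow> real"
  assumes der: "\<And>k x. (d k has_real_derivative d (Suc k) x) (at x)"
    and p0: "\<And>x. d 0 (x + 2*pi) = d 0 x"
  shows "d k (x + 2*pi) = d k x"
proof (induction k arbitrary: x)
  case 0 then show ?case by (rule p0)
next
  case (Suc k)
  have "((\<lambda>x. d k (x + 2*pi)) has_real_derivative d (Suc k) (x + 2*pi)) (at x)"
    using der[of k "x + 2*pi"] DERIV_shift by blast
  moreover have "((\<lambda>x. d k (x + 2*pi)) has_real_derivative d (Suc k) x) (at x)"
    using der[of k x] Suc.IH by simp
  ultimately show ?case by (rule DERIV_unique)
qed

theorem lemma6p3:
  fixes I :: "real set" and \<alpha> :: "real \<Rightarrow> real \<Rightarrow> real"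
  assumes interval: "is_interval I"
    and periodic: "\<forall>\<tau>\<in>I. \<forall>\<theta>. \<alpha> \<tau> (\<theta> + 2*pi) = \<alpha> \<tau> \<theta>"
    and smooth: "smooth2_on (I \<times> UNIV) (\<lambda>(\<tau>, \<theta>). \<alpha> \<tau> \<theta>)"
    and pos: "\<forall>\<tau>\<in>I. \<forall>\<theta>. 0 < \<alpha> \<tau> \<theta>"
    and eqn: "\<forall>\<tau>\<in>I. \<forall>\<theta>.
      ((\<lambda>t. complex_of_real (\<alpha> t \<theta>)) has_vector_derivative
        (- complex_of_real (\<alpha> \<tau> \<theta>) * Lam (\<lambda>x. complex_of_real (\<alpha> \<tau> x)) \<theta>
         + hilbert (\<lambda>x. complex_of_real (\<alpha> \<tau> x)) \<theta> * Dop (\<lambda>x. complex_of_real (\<alpha> \<tau> x)) \<theta>))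
        (at \<tau> within I)"
  shows "\<forall>\<tau>1\<in>I. \<forall>\<tau>2\<in>I.
    integral {0..2*pi} (\<lambda>\<theta>. 1 / \<alpha> \<tau>1 \<theta>) = integral {0..2*pi} (\<lambda>\<theta>. 1 / \<alpha> \<tau>2 \<theta>)"
proof -
  obtain G :: "nat \<Rightarrow> nat \<Rightarrow> real \<times> real \<Rightarrow> real" where
    G0: "\<forall>x\<in>I \<times> UNIV. G 0 0 x = (\<lambda>(\<tau>, \<theta>). \<alpha> \<tau> \<theta>) x" and
    GD: "\<forall>j k. \<forall>x\<in>I \<times> UNIV. (G j k has_derivative (\<lambda>h. fst h * G (Suc j) k x + snd h * G j (Suc k) x)) (at x within I \<times> UNIV)"
    using smooth unfolding smooth2_on_def by blast
  have Ga: "G 0 0 (t, y) = \<alpha> t y" if "t \<in> I" for t y using G0 that by auto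
  have cG: "continuous_on (I \<times> UNIV) (G j k)" for j k
    unfolding continuous_on_eq_continuous_within
  proof
    fix x :: "real \<times> real" assume "x \<in> I \<times> UNIV"
    with GD have "(G j k has_derivative (\<lambda>h. fst h * G (Suc j) k x + snd h * G j (Suc k) x)) (at x within I \<times> UNIV)"
      by blast
    thus "continuous (at x within I \<times> UNIV) (G j k)"
      by (rule has_derivative_continuous)
  qed
  have tder: "((\<lambda>s. \<alpha> s y) has_real_derivative G 1 0 (t, y)) (at t within I)" if t: "t \<in> I" for t y
  proof -
    have "((\<lambda>s. G 0 0 (s, y)) has_real_derivative G 1 0 (t, y)) (at t within I)"
      using partials(2)[OF GD t, of 0 0 y] by simp
    thus ?thesis unfolding has_field_derivative_def
      by (rule has_derivative_transform[OF t, rotated]) (simp add: Ga)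
  qed
  show ?thesis
  proof (cases "\<forall>x\<in>I. \<forall>y\<in>I. x = y")
    case True thus ?thesis by auto
  next
    case False
    then obtain p q where pq: "p \<in> I" "q \<in> I" "p \<noteq> q" by blast
    have conv: "convex I" using interval by (rule is_interval_convex)
    have nb: "at t within I \<noteq> bot" if "t \<in> I" for t
    proof -
      have "t islimpt I"
        by (rule connected_imp_perfect[OF is_interval_connected[OF interval] that]) (use pq in auto)
      thus ?thesis using trivial_limit_within by blast
    qed
    have zero: "integral {0..2*pi} (\<lambda>\<theta>. - G 1 0 (t, \<theta>) / (\<alpha> t \<theta>)^2) = 0" if t: "t \<in> I" for t
    proof -
      define d where "d k y = G 0 k (t, y)" for k y
      have der: "(d k has_real_derivative d (Suc k) x) (at x)" for k x
        unfolding d_def by (rule partials(1)[OF GD t])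
      have d0: "d 0 y = \<alpha> t y" for y unfolding d_def using Ga[OF t] .
      have p0: "d 0 (x + 2*pi) = d 0 x" for x using periodic t d0 by simp
      have per: "d k (2*pi) = d k 0" for k using periodic_derivs[of d, OF der p0, of k 0] by simp
      have pos': "d 0 x > 0" for x using pos t d0 by simp
      have mi: "integral {0..2*pi} (\<lambda>\<theta>. (- complex_of_real (\<alpha> t \<theta>) * Lam (\<lambda>x. complex_of_real (\<alpha> t x)) \<theta>
         + hilbert (\<lambda>x. complex_of_real (\<alpha> t x)) \<theta> * Dop (\<lambda>x. complex_of_real (\<alpha> t x)) \<theta>) / (complex_of_real (\<alpha> t \<theta>))^2) = 0"
        using main_identity[of d, OF der per pos'] unfolding d0 .
      have Veq: "- complex_of_real (\<alpha> t \<theta>) * Lam (\<lambda>x. complex_of_real (\<alpha> t x)) \<theta>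
         + hilbert (\<lambda>x. complex_of_real (\<alpha> t x)) \<theta> * Dop (\<lambda>x. complex_of_real (\<alpha> t x)) \<theta> = complex_of_real (G 1 0 (t, \<theta>))" for \<theta>
        by (rule vector_derivative_unique_within[OF nb[OF t] eqn[rule_format, OF t] has_vector_derivative_of_real[OF tder[OF t]]])
      define r where "r \<theta> = G 1 0 (t, \<theta>) / (\<alpha> t \<theta>)^2" for \<theta>
      have ext1: "(\<lambda>\<theta>. (- complex_of_real (\<alpha> t \<theta>) * Lam (\<lambda>x. complex_of_real (\<alpha> t x)) \<theta>
         + hilbert (\<lambda>x. complex_of_real (\<alpha> t x)) \<theta> * Dop (\<lambda>x. complex_of_real (\<alpha> t x)) \<theta>) / (complex_of_real (\<alpha> t \<theta>))^2)
         = (\<lambda>\<theta>. complex_of_real (r \<theta>))"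
      proof (rule ext)
        fix \<theta>
        show "(- complex_of_real (\<alpha> t \<theta>) * Lam (\<lambda>x. complex_of_real (\<alpha> t x)) \<theta>
         + hilbert (\<lambda>x. complex_of_real (\<alpha> t x)) \<theta> * Dop (\<lambda>x. complex_of_real (\<alpha> t x)) \<theta>) / (complex_of_real (\<alpha> t \<theta>))^2
         = complex_of_real (r \<theta>)"
          unfolding Veq r_def by (simp only: of_real_divide of_real_power)
      qed
      have ci: "integral {0..2*pi} (\<lambda>\<theta>. complex_of_real (r \<theta>)) = 0"
        using mi unfolding ext1 .
      have rc: "continuous_on {0..2*pi} r"
      proof -
        have "continuous_on UNIV (\<lambda>\<theta>. G 1 0 (t, \<theta>))"
          by (rule continuous_on_compose2[OF cG]) (use t in \<open>auto intro!: continuous_intros\<close>)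
        moreover have "continuous_on UNIV (\<lambda>\<theta>. \<alpha> t \<theta>)"
        proof -
          have "continuous_on UNIV (d 0)" using der[of 0]
            by (meson DERIV_isCont continuous_at_imp_continuous_on)
          thus ?thesis unfolding d0[abs_def] .
        qed
        ultimately have "continuous_on UNIV r" unfolding r_def using pos t
          by (intro continuous_intros) (auto simp: less_imp_neq[symmetric])
        thus ?thesis by (rule continuous_on_subset) simp
      qed
      have "((\<lambda>\<theta>. complex_of_real (r \<theta>)) has_integral complex_of_real (integral {0..2*pi} r)) {0..2*pi}"
        by (rule has_integral_of_real[OF integrable_integral[OF integrable_continuous_real[OF rc]]])
      hence "integral {0..2*pi} (\<lambda>\<theta>. complex_of_real (r \<theta>)) = complex_of_real (integral {0..2*pi} r)"
        by (rule integral_unique)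
      hence "integral {0..2*pi} r = 0" using ci by simp
      thus ?thesis unfolding r_def by (simp add: integral_neg)
    qed
    define F where "F x = integral (cbox 0 (2*pi)) (\<lambda>\<theta>. 1 / \<alpha> x \<theta>)" for x
    have Fd: "(F has_field_derivative 0) (at t within I)" if t: "t \<in> I" for t
    proof -
      have "(F has_field_derivative integral (cbox 0 (2*pi)) (\<lambda>\<theta>. - G 1 0 (t, \<theta>) / (\<alpha> t \<theta>)^2)) (at t within I)"
        unfolding F_def
      proof (rule leibniz_rule_field_derivative[OF _ _ _ t conv])
        fix x y assume x: "x \<in> I"
        show "((\<lambda>x. 1 / \<alpha> x y) has_field_derivative - G 1 0 (x, y) / (\<alpha> x y)\<^sup>2) (at x within I)"
        proof -
          have "\<alpha> x y > 0" using pos x by blast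
          thus ?thesis by (auto intro!: derivative_eq_intros tder[OF x] simp: power2_eq_square)
        qed
      next
        fix x assume x: "x \<in> I"
        have "continuous_on UNIV (\<lambda>\<theta>. G 0 0 (x, \<theta>))"
          by (rule continuous_on_compose2[OF cG]) (use x in \<open>auto intro!: continuous_intros\<close>)
        hence "continuous_on UNIV (\<lambda>\<theta>. \<alpha> x \<theta>)" using Ga[OF x] by simp
        hence "continuous_on UNIV (\<lambda>\<theta>. 1 / \<alpha> x \<theta>)" using pos x
          by (intro continuous_intros) (auto simp: less_imp_neq[symmetric])
        hence "continuous_on (cbox 0 (2*pi)) (\<lambda>\<theta>. 1 / \<alpha> x \<theta>)"
          by (rule continuous_on_subset) simp
        thus "(\<lambda>\<theta>. 1 / \<alpha> x \<theta>) integrable_on cbox 0 (2*pi)" by (rule integrable_continuous)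
      next
        have "continuous_on (I \<times> cbox 0 (2*pi)) (\<lambda>z. - G 1 0 z / (G 0 0 z)^2)"
        proof -
          have nz: "G 0 0 z \<noteq> 0" if zI: "z \<in> I \<times> cbox 0 (2*pi)" for z
          proof -
            obtain x y where z: "z = (x, y)" "x \<in> I" using zI by (cases z) auto
            have "\<alpha> x y > 0" using pos z(2) by blast
            thus ?thesis using Ga[OF z(2), of y] z(1) by simp
          qed
          show ?thesis
            by (intro continuous_intros continuous_on_subset[OF cG]) (use nz in auto)
        qed
        thus "continuous_on (I \<times> cbox 0 (2*pi)) (\<lambda>(x, t). - G 1 0 (x, t) / (\<alpha> x t)\<^sup>2)"
          by (rule continuous_on_eq) (auto simp: Ga)
      qed
      thus ?thesis using zero[OF t] by simp
    qed
    have "\<exists>c. \<forall>x\<in>I. F x = c"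
    proof (rule has_derivative_zero_constant[OF conv])
      fix x assume "x \<in> I"
      show "(F has_derivative (\<lambda>h. 0)) (at x within I)"
      proof -
        have "((*) (0::real)) = (\<lambda>h. 0)" by auto
        thus ?thesis using Fd[OF \<open>x \<in> I\<close>] by (simp add: has_field_derivative_def)
      qed
    qed
    then obtain c where "\<forall>x\<in>I. F x = c" by blast
    thus ?thesis unfolding F_def by simp
  qed
qed

end
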